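(* In the setting below (Assumptions 1–8 hold, and $\mathbf{y}$, $\mathbf{y}_{rep}$ are independent), $\widetilde{\boldsymbol{\theta}}_n^s\to_p\boldsymbol{\theta}_n^p$, where $$\widetilde{\boldsymbol{\theta}}_n^s=\arg\max_{\boldsymbol{\theta}}\left\{\ln p(\mathbf{y}_{rep}|\boldsymbol{\theta})-\frac n2\left(\widehat{\boldsymbol{\theta}}_n(\mathbf{y})-\boldsymbol{\theta}\right)'(-\mathbf{H}_n^d)\left(\widehat{\boldsymbol{\theta}}_n(\mathbf{y})-\boldsymbol{\theta}\right)\right\}.$$
   Context: Setting: i.i.d. data $\mathbf{y}=(y_1,\dots,y_n)$ with density $g$; $\mathbf{y}_{rep}$ an independent copy with the same distribution; model $p(\mathbf{y}|\boldsymbol{\theta})=\prod_tp(y_t|\boldsymbol{\theta})$, $\boldsymbol{\theta}\in\boldsymbol{\Theta}\subseteq\mathbb{R}^P$, prior $p(\boldsymbol{\theta})$; $l_t(\boldsymbol{\theta})=\ln p(y_t|\boldsymbol{\theta})$. Expectations under $g$. $\widehat{\boldsymbol{\theta}}_n(\mathbf{y})=\arg\max\ln p(\mathbf{y}|\boldsymbol{\theta})$ (QML estimator). $\mathbf{B}_n(\boldsymbol{\theta})=\mathrm{Var}[n^{-1/2}\sum_t\nabla l_t(\boldsymbol{\theta})]$, $\mathbf{H}_n(\boldsymbol{\theta})=E[\frac1n\sum_t\nabla^2l_t(\boldsymbol{\theta})]$, $\boldsymbol{\theta}_n^p=\arg\min_{\boldsymbol{\theta}\in\boldsymbol{\Theta}}\frac1n\int\ln\frac{g(\mathbf{y})}{p(\mathbf{y}|\boldsymbol{\theta})}g(\mathbf{y})d\mathbf{y}$,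 $\mathbf{H}_n=\mathbf{H}_n(\boldsymbol{\theta}_n^p)$, and $\mathbf{H}_n^d$ is the diagonal matrix with the diagonal entries of $\mathbf{H}_n$. Assumptions: (1) $\boldsymbol{\Theta}$ compact. (2) $y_t$ i.i.d. (3) $l_t$ eight times differentiable a.s. (4) For $j=0,\dots,3$, $\|\nabla^jl_t(\boldsymbol{\theta})-\nabla^jl_t(\boldsymbol{\theta}')\|\le c_t^j(y_t)\|\boldsymbol{\theta}-\boldsymbol{\theta}'\|$ in probability, $c_t^j>0$, $\sup_tE\|c_t^j\|<\infty$, $\frac1n\sum_t(c_t^j-Ec_t^j)\to_p0$. (5) For $j=0,\dots,4$, $\sup_{\boldsymbol{\Theta}}\|\nabla^jl_t\|\le M_t(y_t)$, $\sup_tE\|M_t\|^{r+\delta}\le M<\infty$, some $\delta>0,r>2$. (6) $\boldsymbol{\theta}_n^p$ interior uniformly in $n$, and for all $\varepsilon>0$, $\limsup_n\sup_{\boldsymbol{\Theta}\setminus N(\boldsymbol{\theta}_n^p,\varepsilon)}\frac1n\sum_t\{El_t(\boldsymbol{\theta})-El_t(\boldsymbol{\theta}_n^p)\}<0$. (7) $\mathbf{H}_n(\boldsymbol{\theta}_n^p)$ negative definite, $\mathbf{B}_n(\boldsymbol{\theta}_n^p)$ positive definite, uniformly in $n$. (8) $p(\boldsymbol{\theta})$ thrice continuously differentiable, $0<p(\boldsymbol{\theta}_n^p)<\infty$ uniformly in $n$, posterior proper with finite second moment for large $n$. *)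

theory Defs
  imports "HOL-Probability.Probability"
begin

definition pdiff :: "'p::finite \<Rightarrow> (real^'p \<Rightarrow> real) \<Rightarrow> real^'p \<Rightarrow> real" where
  "pdiff i f \<theta> = deriv (\<lambda>h. f (\<theta> + h *\<^sub>R axis i 1)) 0"

text \<open>Iterated partial derivatives: pd f [i1,...,ik] is the k-th order partial
  derivative (the entries of the k-th derivative tensor nabla^k f).\<close>
fun pd :: "(real^'p::finite \<Rightarrow> real) \<Rightarrow> 'p list \<Rightarrow> real^'p \<Rightarrow> real" where
  "pd f [] = f"
| "pd f (i # is) = pdiff i (pd f is)"

definition tnorm :: "('p::finite list \<Rightarrow> real) \<Rightarrow> nat \<Rightarrow> real" where
  "tnorm T j = sqrt (\<Sum>is\<in>{is. length is = j}. (T is)\<^sup>2)"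

definition k_times_differentiable_on :: "nat \<Rightarrow> (real^'p::finite \<Rightarrow> real) \<Rightarrow> (real^'p) set \<Rightarrow> bool" where
  "k_times_differentiable_on k f S \<longleftrightarrow>
     (\<forall>is. length is < k \<longrightarrow> (\<forall>\<theta>\<in>S. pd f is differentiable (at \<theta>)))"

definition pos_def_mat :: "real^'n^'n \<Rightarrow> bool" where
  "pos_def_mat A \<longleftrightarrow> (\<forall>x. x \<noteq> 0 \<longrightarrow> 0 < x \<bullet> (A *v x))"

definition neg_def_mat :: "real^'n^'n \<Rightarrow> bool" where
  "neg_def_mat A \<longleftrightarrow> (\<forall>x. x \<noteq> 0 \<longrightarrow> x \<bullet> (A *v x) < 0)"

definition conv_in_prob :: "'w measure \<Rightarrow> (nat \<Rightarrow> 'w \<Rightarrow> 'b::metric_space) \<Rightarrow> 'b \<Rightarrow> bool" where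
  "conv_in_prob M X c \<longleftrightarrow>
     (\<forall>\<epsilon>>0. (\<lambda>n. measure M {\<omega>\<in>space M. \<epsilon> < dist (X n \<omega>) c}) \<longlonglongrightarrow> 0)"

definition loglik :: "(real^'p::finite \<Rightarrow> 'a \<Rightarrow> real) \<Rightarrow> real^'p \<Rightarrow> 'a \<Rightarrow> real" where
  "loglik pdens \<theta> y = ln (pdens \<theta> y)"

definition KL_div :: "'a measure \<Rightarrow> ('a \<Rightarrow> real) \<Rightarrow> (real^'p::finite \<Rightarrow> 'a \<Rightarrow> real) \<Rightarrow> real^'p \<Rightarrow> real" where
  "KL_div \<mu> g pdens \<theta> = (LINT y|\<mu>. g y * ln (g y / pdens \<theta> y))"

definition exp_hessian :: "'a measure \<Rightarrow> (real^'p::finite \<Rightarrow> 'a \<Rightarrow> real) \<Rightarrow> real^'p \<Rightarrow> real^'p^'p" where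
  "exp_hessian D l \<theta> = (\<chi> i j. LINT y|D. pd (\<lambda>\<theta>. l \<theta> y) [i, j] \<theta>)"

definition score_var :: "'a measure \<Rightarrow> (real^'p::finite \<Rightarrow> 'a \<Rightarrow> real) \<Rightarrow> real^'p \<Rightarrow> real^'p^'p" where
  "score_var D l \<theta> = (\<chi> i j. (LINT y|D. pd (\<lambda>\<theta>. l \<theta> y) [i] \<theta> * pd (\<lambda>\<theta>. l \<theta> y) [j] \<theta>)
       - (LINT y|D. pd (\<lambda>\<theta>. l \<theta> y) [i] \<theta>) * (LINT y|D. pd (\<lambda>\<theta>. l \<theta> y) [j] \<theta>))"

definition diag_part :: "real^'n^'n \<Rightarrow> real^'n^'n" where
  "diag_part A = (\<chi> i j. if i = j then A $ i $ i else 0)"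

end

theory Submission
  imports Defs
begin


lemma wlln:
  fixes M :: "'w measure" and \<mu> :: "'a measure" and X :: "'i \<Rightarrow> 'w \<Rightarrow> 'a"
    and idx :: "nat \<Rightarrow> 'i" and P :: "'a measure" and f :: "'a \<Rightarrow> real"
  assumes M: "prob_space M"
   and ind: "prob_space.indep_vars M (\<lambda>_. \<mu>) X UNIV"
   and dist: "\<And>i. distr M \<mu> (X i) = P"
   and inj: "inj idx"
   and fm: "f \<in> borel_measurable \<mu>"
   and f2: "integrable P (\<lambda>y. (f y)^2)"
   and a: "0 < a"
  shows "(\<lambda>n. measure M {\<omega>\<in>space M. a \<le> \<bar>(\<Sum>t<n. f (X (idx t) \<omega>)) / real n - (\<integral>y. f y \<partial>P)\<bar>}) \<longlonglongrightarrow> 0"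
proof -
  interpret prob_space M by (rule M)
  have Xm[measurable]: "X i \<in> measurable M \<mu>" for i
    using ind unfolding indep_vars_def by auto
  note fm[measurable]
  interpret P: prob_space P using dist[of undefined] prob_space_distr[OF Xm[of undefined]] by simp
  have sP: "sets P = sets \<mu>" using dist[of undefined] by (metis sets_distr)
  have fmP[measurable]: "f \<in> borel_measurable P" using fm sP by (simp cong: measurable_cong_sets)
  have fint: "integrable P f" by (rule P.square_integrable_imp_integrable[OF fmP f2])
  define m where "m = (\<integral>y. f y \<partial>P)"
  define V where "V = (\<integral>y. (f y - m)^2 \<partial>P)"
  define Z where "Z i \<omega> = f (X i \<omega>) - m" for i \<omega>
  have Zm[measurable]: "Z i \<in> borel_measurable M" for i unfolding Z_def by measurable
  have g2: "integrable P (\<lambda>y. (f y - m)^2)"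
    using f2 fint unfolding power2_eq_square ring_distribs
    by (intro Bochner_Integration.integrable_diff) auto
  have transint: "integrable M (\<lambda>\<omega>. h (X i \<omega>))" if "h \<in> borel_measurable \<mu>" "integrable P h"
    for h :: "'a \<Rightarrow> real" and i
    using integrable_distr_eq[OF Xm that(1), of i] that(2) dist[of i] by simp
  have transeq: "(\<integral>\<omega>. h (X i \<omega>) \<partial>M) = (\<integral>y. h y \<partial>P)" if "h \<in> borel_measurable \<mu>"
    for h :: "'a \<Rightarrow> real" and i
    using integral_distr[OF Xm that, of i] dist[of i] by simp
  have Zint: "integrable M (Z i)" for i
    unfolding Z_def using transint[OF fm fint, of i] by simp
  have Z2int: "integrable M (\<lambda>\<omega>. (Z i \<omega>)^2)" for i
    unfolding Z_def using transint[OF _ g2, of i] by simp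
  have EZ: "(\<integral>\<omega>. Z i \<omega> \<partial>M) = 0" for i
    unfolding Z_def using transint[OF fm fint, of i] transeq[OF fm, of i] prob_space
    by (simp add: m_def)
  have EZ2: "(\<integral>\<omega>. (Z i \<omega>)^2 \<partial>M) = V" for i
    unfolding Z_def V_def using transeq[of "\<lambda>y. (f y - m)^2" i] by simp
  have prodint: "integrable M (\<lambda>\<omega>. Z i \<omega> * Z j \<omega>)" for i j
  proof (rule Bochner_Integration.integrable_bound[of _ "\<lambda>\<omega>. (Z i \<omega>)^2 + (Z j \<omega>)^2"])
    show "integrable M (\<lambda>\<omega>. (Z i \<omega>)^2 + (Z j \<omega>)^2)" using Z2int by auto
    show "AE \<omega> in M. norm (Z i \<omega> * Z j \<omega>) \<le> norm ((Z i \<omega>)^2 + (Z j \<omega>)^2)"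
    proof (intro AE_I2)
      fix \<omega>
      have "2 * \<bar>Z i \<omega>\<bar> * \<bar>Z j \<omega>\<bar> \<le> (Z i \<omega>)^2 + (Z j \<omega>)^2"
        using sum_squares_bound[of "\<bar>Z i \<omega>\<bar>" "\<bar>Z j \<omega>\<bar>"] by (simp only: power2_abs)
      moreover have "\<bar>Z i \<omega>\<bar> * \<bar>Z j \<omega>\<bar> \<le> 2 * \<bar>Z i \<omega>\<bar> * \<bar>Z j \<omega>\<bar>" by simp
      moreover have "norm ((Z i \<omega>)^2 + (Z j \<omega>)^2) = (Z i \<omega>)^2 + (Z j \<omega>)^2" by simp
      ultimately show "norm (Z i \<omega> * Z j \<omega>) \<le> norm ((Z i \<omega>)^2 + (Z j \<omega>)^2)"
        unfolding real_norm_def abs_mult by linarith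
    qed
  qed simp
  have cross: "(\<integral>\<omega>. Z i \<omega> * Z j \<omega> \<partial>M) = 0" if "i \<noteq> j" for i j
  proof -
    have iv: "indep_vars (\<lambda>_. borel) Z {i, j}"
      unfolding Z_def
      by (rule indep_vars_compose2[where X=X and M'="\<lambda>_. \<mu>", OF indep_vars_subset[OF ind]]) auto
    have "(\<integral>\<omega>. (\<Prod>k\<in>{i,j}. Z k \<omega>) \<partial>M) = (\<Prod>k\<in>{i,j}. \<integral>\<omega>. Z k \<omega> \<partial>M)"
      by (rule indep_vars_lebesgue_integral[OF _ iv]) (auto simp: Zint)
    then show ?thesis using that EZ by simp
  qed
  define S where "S n \<omega> = (\<Sum>t<n. Z (idx t) \<omega>)" for n \<omega>
  have Sm[measurable]: "S n \<in> borel_measurable M" for n unfolding S_def by measurable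
  have S2: "(\<integral>\<omega>. (S n \<omega>)^2 \<partial>M) = real n * V" for n
  proof -
    have "(\<lambda>\<omega>. (S n \<omega>)^2) = (\<lambda>\<omega>. \<Sum>s<n. \<Sum>t<n. Z (idx s) \<omega> * Z (idx t) \<omega>)"
      unfolding S_def power2_eq_square by (simp add: sum_product)
    then have "(\<integral>\<omega>. (S n \<omega>)^2 \<partial>M) = (\<Sum>s<n. \<Sum>t<n. \<integral>\<omega>. Z (idx s) \<omega> * Z (idx t) \<omega> \<partial>M)"
      by (simp add: Bochner_Integration.integral_sum prodint Bochner_Integration.integrable_sum)
    also have "\<dots> = (\<Sum>s<n. \<Sum>t<n. if s = t then V else 0)"
      using inj cross EZ2 by (intro sum.cong refl) (auto simp: inj_eq power2_eq_square[symmetric])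
    also have "\<dots> = real n * V" by simp
    finally show ?thesis .
  qed
  have S2int: "integrable M (\<lambda>\<omega>. (S n \<omega>)^2)" for n
  proof -
    have "(\<lambda>\<omega>. (S n \<omega>)^2) = (\<lambda>\<omega>. \<Sum>s<n. \<Sum>t<n. Z (idx s) \<omega> * Z (idx t) \<omega>)"
      unfolding S_def power2_eq_square by (simp add: sum_product)
    then show ?thesis by (simp add: prodint Bochner_Integration.integrable_sum)
  qed
  have V0: "0 \<le> V" unfolding V_def by simp
  have bound: "measure M {\<omega>\<in>space M. a \<le> \<bar>(\<Sum>t<n. f (X (idx t) \<omega>)) / real n - m\<bar>} \<le> V / (a^2 * real n)"
    if n: "0 < n" for n
  proof -
    have eq: "{\<omega>\<in>space M. a \<le> \<bar>(\<Sum>t<n. f (X (idx t) \<omega>)) / real n - m\<bar>}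
          = {\<omega>\<in>space M. real n * a \<le> \<bar>S n \<omega>\<bar>}"
    proof -
      have "(\<Sum>t<n. f (X (idx t) \<omega>)) / real n - m = S n \<omega> / real n" for \<omega>
        using n by (simp add: S_def Z_def sum_subtractf field_simps)
      moreover have "a \<le> \<bar>x / real n\<bar> \<longleftrightarrow> real n * a \<le> \<bar>x\<bar>" for x
        using n by (simp add: field_simps)
      ultimately show ?thesis by simp
    qed
    have "measure M {\<omega>\<in>space M. real n * a \<le> \<bar>S n \<omega>\<bar>} \<le> (\<integral>\<omega>. (S n \<omega>)^2 \<partial>M) / (real n * a)^2"
      by (rule second_moment_method) (use n a S2int in auto)
    also have "\<dots> = V / (a^2 * real n)" using n a S2[of n] by (simp add: power2_eq_square field_simps)
    finally show ?thesis using eq by simp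
  qed
  have lt: "filterlim (\<lambda>n. a^2 * real n) at_top sequentially"
    by (intro filterlim_tendsto_pos_mult_at_top[OF tendsto_const])
       (use a in \<open>auto intro: filterlim_real_sequentially\<close>)
  have lim: "(\<lambda>n. V / (a^2 * real n)) \<longlonglongrightarrow> 0"
    by (intro tendsto_divide_0[OF tendsto_const] filterlim_at_top_imp_at_infinity lt)
  show ?thesis unfolding m_def[symmetric]
  proof (rule tendsto_sandwich[OF _ _ tendsto_const lim])
    show "\<forall>\<^sub>F n in sequentially. 0 \<le> measure M {\<omega>\<in>space M. a \<le> \<bar>(\<Sum>t<n. f (X (idx t) \<omega>)) / real n - m\<bar>}"
      by simp
    show "\<forall>\<^sub>F n in sequentially. measure M {\<omega>\<in>space M. a \<le> \<bar>(\<Sum>t<n. f (X (idx t) \<omega>)) / real n - m\<bar>} \<le> V / (a^2 * real n)"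
      using eventually_gt_at_top[of "0::nat"] by (rule eventually_mono) (rule bound)
  qed
qed



lemma tnorm0: "tnorm T 0 = \<bar>T []\<bar>"
proof -
  have "{is::'p list. length is = 0} = {[]}" by auto
  then show ?thesis unfolding tnorm_def by simp
qed

lemma diag_psd:
  fixes H :: "real^'n^'n"
  assumes "neg_def_mat H"
  shows "0 \<le> v \<bullet> ((- diag_part H) *v v)"
proof -
  have Hii: "H $ i $ i < 0" for i
  proof -
    have "axis i (1::real) \<noteq> 0" by (simp add: axis_eq_0_iff)
    then have "axis i 1 \<bullet> (H *v axis i 1) < 0" using assms unfolding neg_def_mat_def by blast
    moreover have "axis i 1 \<bullet> (H *v axis i 1) = H $ i $ i"
    proof -
      have a1: "\<And>P x::real. (if P then 1 else 0) * x = (if P then x else 0)" by simp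
      have a2: "\<And>P x::real. x * (if P then 1 else 0) = (if P then x else 0)" by simp
      show ?thesis by (simp add: inner_vec_def matrix_vector_mult_def axis_def a1 a2 cong: if_cong)
    qed
    ultimately show ?thesis by simp
  qed
  have "v \<bullet> ((- diag_part H) *v v) = (\<Sum>i\<in>UNIV. - H $ i $ i * (v $ i)^2)"
  proof -
    have a1: "\<And>P x y::real. (if P then x else 0) * y = (if P then x * y else 0)" by simp
    show ?thesis
      by (simp add: inner_vec_def matrix_vector_mult_def diag_part_def a1 power2_eq_square
        cong: if_cong) (simp add: sum_negf algebra_simps)
  qed
  also have "\<dots> \<ge> 0" using Hii by (intro sum_nonneg) (simp add: mult_nonpos_nonneg less_imp_le)
  finally show ?thesis .
qed

lemma quad_lip:
  fixes D :: "real^'n^'n"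
  obtains B where "B > 0" "\<And>v w. \<bar>v \<bullet> (D *v v) - w \<bullet> (D *v w)\<bar> \<le> B * norm (v - w) * (norm v + norm w)"
proof -
  obtain K where K: "K > 0" "\<And>x. norm (D *v x) \<le> norm x * K"
    using bounded_linear.pos_bounded[OF matrix_vector_mul_bounded_linear[of D]] by blast
  have "\<bar>v \<bullet> (D *v v) - w \<bullet> (D *v w)\<bar> \<le> K * norm (v - w) * (norm v + norm w)" for v w
  proof -
    have eq: "v \<bullet> (D *v v) - w \<bullet> (D *v w) = (v - w) \<bullet> (D *v v) + w \<bullet> (D *v (v - w))"
      by (simp add: matrix_vector_mult_diff_distrib inner_diff_left inner_diff_right)
    have 1: "\<bar>(v - w) \<bullet> (D *v v)\<bar> \<le> norm (v - w) * (norm v * K)"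
      using Cauchy_Schwarz_ineq2[of "v - w" "D *v v"] K(2)[of v]
      by (meson norm_ge_zero mult_left_mono order_trans)
    have 2: "\<bar>w \<bullet> (D *v (v - w))\<bar> \<le> norm w * (norm (v - w) * K)"
      using Cauchy_Schwarz_ineq2[of w "D *v (v - w)"] K(2)[of "v - w"]
      by (meson norm_ge_zero mult_left_mono order_trans)
    have "\<bar>v \<bullet> (D *v v) - w \<bullet> (D *v w)\<bar> \<le> norm (v - w) * (norm v * K) + norm w * (norm (v - w) * K)"
      unfolding eq using 1 2 by linarith
    also have "\<dots> = K * norm (v - w) * (norm v + norm w)" by (simp add: algebra_simps)
    finally show ?thesis .
  qed
  then show ?thesis using that K(1) by blast
qed

lemma sq_le_powr:
  fixes x p :: real assumes "0 \<le> x" "2 \<le> p"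
  shows "x^2 \<le> 1 + x powr p"
proof (cases "x \<le> 1")
  case True
  then have "x^2 \<le> 1" using assms by (simp add: power_le_one)
  then show ?thesis by (smt (verit) powr_ge_zero)
next
  case False
  then have "x^2 = x powr 2" using assms by (simp add: powr_numeral)
  also have "\<dots> \<le> x powr p" using False assms by (intro powr_mono) auto
  finally show ?thesis by simp
qed

lemma markov_avg:
  fixes M :: "'w measure" and \<mu> :: "'a measure" and X :: "nat \<Rightarrow> 'w \<Rightarrow> 'a" and c :: "'a \<Rightarrow> real"
  assumes M: "prob_space M"
   and Xm: "\<And>t. X t \<in> measurable M \<mu>"
   and dist: "\<And>t. distr M \<mu> (X t) = P"
   and cm: "c \<in> borel_measurable \<mu>" and ci: "integrable P c" and c0: "\<forall>y\<in>space \<mu>. 0 \<le> c y"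
   and K: "0 < K" and n: "0 < n"
  shows "measure M {\<omega>\<in>space M. K \<le> (\<Sum>t<n. c (X t \<omega>)) / real n} \<le> (\<integral>y. c y \<partial>P) / K"
proof -
  interpret prob_space M by (rule M)
  note Xm[measurable] cm[measurable]
  have int: "integrable M (\<lambda>\<omega>. c (X t \<omega>))" for t
    using integrable_distr_eq[OF Xm cm, of t] ci dist[of t] by simp
  have eq: "(\<integral>\<omega>. c (X t \<omega>) \<partial>M) = (\<integral>y. c y \<partial>P)" for t
    using integral_distr[OF Xm cm, of t] dist[of t] by simp
  have "measure M {\<omega>\<in>space M. K \<le> (\<Sum>t<n. c (X t \<omega>)) / real n} \<le> (\<integral>\<omega>. (\<Sum>t<n. c (X t \<omega>)) / real n \<partial>M) / K"
  proof (rule integral_Markov_inequality_measure[OF _ sets.top])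
    show "integrable M (\<lambda>\<omega>. (\<Sum>t<n. c (X t \<omega>)) / real n)" using int by auto
    show "AE x in M. 0 \<le> (\<Sum>t<n. c (X t x)) / real n"
      using c0 Xm by (intro AE_I2 divide_nonneg_nonneg sum_nonneg) (auto intro: measurable_space[OF Xm])
  qed (rule K)
  also have "(\<integral>\<omega>. (\<Sum>t<n. c (X t \<omega>)) / real n \<partial>M) = (\<integral>y. c y \<partial>P)"
    using n int eq by (simp add: Bochner_Integration.integral_sum)
  finally show ?thesis .
qed



theorem lemmaA1:
  fixes M :: "'w measure" and \<mu> :: "'a measure"
    and Y Yrep :: "nat \<Rightarrow> 'w \<Rightarrow> 'a"
    and g :: "'a \<Rightarrow> real"
    and pdens :: "real^'p::finite \<Rightarrow> 'a \<Rightarrow> real"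
    and pr :: "real^'p \<Rightarrow> real"
    and \<Theta> :: "(real^'p) set"
    and \<theta>p :: "real^'p"
    and \<theta>hat \<theta>til :: "nat \<Rightarrow> 'w \<Rightarrow> real^'p"
    and c :: "nat \<Rightarrow> 'a \<Rightarrow> real" and Mf :: "'a \<Rightarrow> real"
    and Mb r \<delta> :: real
  assumes M: "prob_space M"
    and meas: "\<forall>t. Y t \<in> measurable M \<mu> \<and> Yrep t \<in> measurable M \<mu>"
    and indep: "prob_space.indep_vars M (\<lambda>_. \<mu>)
                  (\<lambda>(b, t). if b then Y t else Yrep t) (UNIV :: (bool \<times> nat) set)"
    and ident: "\<forall>t. distr M \<mu> (Y t) = density \<mu> g \<and> distr M \<mu> (Yrep t) = density \<mu> g"
    and g: "g \<in> borel_measurable \<mu>" "\<forall>y\<in>space \<mu>. 0 \<le> g y"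
    and model: "\<forall>\<theta>\<in>\<Theta>. pdens \<theta> \<in> borel_measurable \<mu> \<and> (\<forall>y\<in>space \<mu>. 0 < pdens \<theta> y)
                    \<and> integral\<^sup>L \<mu> (pdens \<theta>) = 1"
    and pseudo_true: "\<theta>p \<in> \<Theta>" "\<forall>\<theta>\<in>\<Theta>. KL_div \<mu> g pdens \<theta>p \<le> KL_div \<mu> g pdens \<theta>"
    and QML: "\<forall>n. \<forall>\<omega>\<in>space M. \<theta>hat n \<omega> \<in> \<Theta> \<and>
                (\<forall>\<theta>\<in>\<Theta>. (\<Sum>t<n. loglik pdens \<theta> (Y t \<omega>)) \<le> (\<Sum>t<n. loglik pdens (\<theta>hat n \<omega>) (Y t \<omega>)))"
    and til_meas: "\<forall>n. \<theta>til n \<in> borel_measurable M"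
    and til_max: "\<forall>n. \<forall>\<omega>\<in>space M. \<theta>til n \<omega> \<in> \<Theta> \<and>
                (\<forall>\<theta>\<in>\<Theta>. (\<Sum>t<n. loglik pdens \<theta> (Yrep t \<omega>))
                   - real n / 2 * ((\<theta>hat n \<omega> - \<theta>) \<bullet> ((- diag_part (exp_hessian (density \<mu> g) (loglik pdens) \<theta>p)) *v (\<theta>hat n \<omega> - \<theta>)))
                 \<le> (\<Sum>t<n. loglik pdens (\<theta>til n \<omega>) (Yrep t \<omega>))
                   - real n / 2 * ((\<theta>hat n \<omega> - \<theta>til n \<omega>) \<bullet> ((- diag_part (exp_hessian (density \<mu> g) (loglik pdens) \<theta>p)) *v (\<theta>hat n \<omega> - \<theta>til n \<omega>))))"
    and A1: "compact \<Theta>"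
    and A3: "AE y in density \<mu> g. k_times_differentiable_on 8 (\<lambda>\<theta>. loglik pdens \<theta> y) \<Theta>"
    and A4: "\<forall>j\<le>3. (\<forall>y\<in>space \<mu>. 0 < c j y) \<and> integrable (density \<mu> g) (c j)
              \<and> (AE y in density \<mu> g. \<forall>\<theta>\<in>\<Theta>. \<forall>\<theta>'\<in>\<Theta>.
                    tnorm (\<lambda>is. pd (\<lambda>\<theta>. loglik pdens \<theta> y) is \<theta> - pd (\<lambda>\<theta>. loglik pdens \<theta> y) is \<theta>') j
                      \<le> c j y * norm (\<theta> - \<theta>'))
              \<and> conv_in_prob M (\<lambda>n \<omega>. (\<Sum>t<n. c j (Y t \<omega>) - (LINT y|density \<mu> g. c j y)) / real n) 0"
    and A5: "0 < \<delta>" "2 < r"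
            "\<forall>j\<le>4. AE y in density \<mu> g. \<forall>\<theta>\<in>\<Theta>. tnorm (\<lambda>is. pd (\<lambda>\<theta>. loglik pdens \<theta> y) is \<theta>) j \<le> Mf y"
            "integrable (density \<mu> g) (\<lambda>y. \<bar>Mf y\<bar> powr (r + \<delta>))"
            "(LINT y|density \<mu> g. \<bar>Mf y\<bar> powr (r + \<delta>)) \<le> Mb"
    and A6: "\<theta>p \<in> interior \<Theta>"
            "\<forall>\<epsilon>>0. \<exists>\<eta>>0. \<forall>\<theta>\<in>\<Theta>. \<epsilon> \<le> dist \<theta> \<theta>p \<longrightarrow>
                 (LINT y|density \<mu> g. loglik pdens \<theta> y) \<le> (LINT y|density \<mu> g. loglik pdens \<theta>p y) - \<eta>"
    and A7: "neg_def_mat (exp_hessian (density \<mu> g) (loglik pdens) \<theta>p)" "pos_def_mat (score_var (density \<mu> g) (loglik pdens) \<theta>p)"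
    and A8: "k_times_differentiable_on 3 pr \<Theta>"
            "\<forall>is. length is \<le> 3 \<longrightarrow> (\<forall>\<theta>\<in>\<Theta>. isCont (pd pr is) \<theta>)"
            "\<forall>\<theta>\<in>\<Theta>. 0 \<le> pr \<theta>" "0 < pr \<theta>p"
            "eventually (\<lambda>n. AE \<omega> in M.
                 set_integrable lborel \<Theta> (\<lambda>\<theta>. exp (\<Sum>t<n. loglik pdens \<theta> (Y t \<omega>)) * pr \<theta>)
               \<and> 0 < (LINT \<theta>:\<Theta>|lborel. exp (\<Sum>t<n. loglik pdens \<theta> (Y t \<omega>)) * pr \<theta>)
               \<and> set_integrable lborel \<Theta> (\<lambda>\<theta>. (norm \<theta>)\<^sup>2 * (exp (\<Sum>t<n. loglik pdens \<theta> (Y t \<omega>)) * pr \<theta>)))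
             sequentially"
  shows "conv_in_prob M \<theta>til \<theta>p"
proof -
  interpret prob_space M by (rule M)
  define P where "P = density \<mu> g"
  define L where "L \<theta> = (LINT y|P. loglik pdens \<theta> y)" for \<theta>
  have Ym[measurable]: "Y t \<in> measurable M \<mu>" for t using meas by blast
  have Rm[measurable]: "Yrep t \<in> measurable M \<mu>" for t using meas by blast
  have distY: "distr M \<mu> (Y t) = P" for t using ident P_def by blast
  have distR: "distr M \<mu> (Yrep t) = P" for t using ident P_def by blast
  interpret P: prob_space P using prob_space_distr[OF Ym[of 0]] distY[of 0] by simp
  have sP: "sets P = sets \<mu>" by (simp add: P_def)
  have lm: "(\<lambda>y. loglik pdens \<theta> y) \<in> borel_measurable \<mu>" if "\<theta> \<in> \<Theta>" for \<theta>
  proof -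
    have [measurable]: "pdens \<theta> \<in> borel_measurable \<mu>" using model that by blast
    show ?thesis unfolding loglik_def by measurable
  qed
  have lmP: "(\<lambda>y. loglik pdens \<theta> y) \<in> borel_measurable P" if "\<theta> \<in> \<Theta>" for \<theta>
    using lm[OF that] sP by (simp cong: measurable_cong_sets)
  have A50: "AE y in P. \<forall>\<theta>\<in>\<Theta>. \<bar>loglik pdens \<theta> y\<bar> \<le> Mf y"
    using A5(3)[rule_format, of 0] unfolding P_def by (simp add: tnorm0)
  have Mfi: "integrable P (\<lambda>y. \<bar>Mf y\<bar> powr (r + \<delta>))" using A5(4) by (simp add: P_def)
  have l2: "integrable P (\<lambda>y. (loglik pdens \<theta> y)^2)" if th: "\<theta> \<in> \<Theta>" for \<theta>
  proof (rule Bochner_Integration.integrable_bound[of _ "\<lambda>y. 1 + \<bar>Mf y\<bar> powr (r + \<delta>)"])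
    show "integrable P (\<lambda>y. 1 + \<bar>Mf y\<bar> powr (r + \<delta>))" using Mfi by simp
    show "(\<lambda>y. (loglik pdens \<theta> y)^2) \<in> borel_measurable P" using lmP[OF th] by measurable
    show "AE y in P. norm ((loglik pdens \<theta> y)^2) \<le> norm (1 + \<bar>Mf y\<bar> powr (r + \<delta>))"
      using A50
    proof eventually_elim
      case (elim y)
      then have "\<bar>loglik pdens \<theta> y\<bar> \<le> \<bar>Mf y\<bar>" using th by force
      then have "(loglik pdens \<theta> y)^2 \<le> \<bar>Mf y\<bar>^2"
        by (metis abs_ge_zero power2_abs power_mono)
      also have "\<dots> \<le> 1 + \<bar>Mf y\<bar> powr (r + \<delta>)" using A5(1,2) by (intro sq_le_powr) auto
      finally show ?case by simp
    qed
  qed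
  have l1: "integrable P (\<lambda>y. loglik pdens \<theta> y)" if "\<theta> \<in> \<Theta>" for \<theta>
    by (rule P.square_integrable_imp_integrable[OF lmP[OF that] l2[OF that]])
  have c0pos: "\<forall>y\<in>space \<mu>. 0 < c 0 y" and c0i: "integrable P (c 0)"
    using A4[rule_format, of 0] by (auto simp: P_def)
  have c0m: "c 0 \<in> borel_measurable \<mu>"
    using borel_measurable_integrable[OF c0i] sP by (simp cong: measurable_cong_sets)
  define Lip where "Lip y \<longleftrightarrow> (\<forall>\<theta>\<in>\<Theta>. \<forall>\<theta>'\<in>\<Theta>. \<bar>loglik pdens \<theta> y - loglik pdens \<theta>' y\<bar> \<le> c 0 y * norm (\<theta> - \<theta>'))" for y
  have LipP: "AE y in P. Lip y"
    using A4[rule_format, of 0] unfolding P_def by (simp add: tnorm0 Lip_def)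
  define m0 where "m0 = (\<integral>y. c 0 y \<partial>P)"
  have m0: "0 \<le> m0" unfolding m0_def using c0pos sP
    by (intro integral_nonneg_AE AE_I2) (auto simp: P_def less_imp_le)
  have Llip: "\<bar>L \<theta> - L \<theta>'\<bar> \<le> m0 * norm (\<theta> - \<theta>')" if th: "\<theta> \<in> \<Theta>" "\<theta>' \<in> \<Theta>" for \<theta> \<theta>'
  proof -
    have eqL: "L \<theta> - L \<theta>' = (\<integral>y. loglik pdens \<theta> y - loglik pdens \<theta>' y \<partial>P)"
      unfolding L_def using l1 th by simp
    have ae: "AE y in P. \<bar>loglik pdens \<theta> y - loglik pdens \<theta>' y\<bar> \<le> c 0 y * norm (\<theta> - \<theta>')"
      using LipP th by (auto simp: Lip_def elim!: eventually_mono)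
    have ae1: "AE y in P. loglik pdens \<theta> y - loglik pdens \<theta>' y \<le> c 0 y * norm (\<theta> - \<theta>')"
      using ae by eventually_elim (simp add: abs_le_iff)
    have ae2: "AE y in P. - (c 0 y * norm (\<theta> - \<theta>')) \<le> loglik pdens \<theta> y - loglik pdens \<theta>' y"
      using ae by eventually_elim (simp add: abs_le_iff)
    have i1: "integrable P (\<lambda>y. loglik pdens \<theta> y - loglik pdens \<theta>' y)" using l1 th by simp
    have i2: "integrable P (\<lambda>y. c 0 y * norm (\<theta> - \<theta>'))" using c0i by simp
    have i3: "integrable P (\<lambda>y. - (c 0 y * norm (\<theta> - \<theta>')))" using c0i by simp
    moreover have "(\<integral>y. loglik pdens \<theta> y - loglik pdens \<theta>' y \<partial>P) \<le> (\<integral>y. c 0 y * norm (\<theta> - \<theta>') \<partial>P)"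
      by (rule integral_mono_AE[OF i1 i2 ae1])
    moreover have "- (\<integral>y. c 0 y * norm (\<theta> - \<theta>') \<partial>P) \<le> (\<integral>y. loglik pdens \<theta> y - loglik pdens \<theta>' y \<partial>P)"
      using integral_mono_AE[OF i3 i1 ae2] by simp
    moreover have "(\<integral>y. c 0 y * norm (\<theta> - \<theta>') \<partial>P) = m0 * norm (\<theta> - \<theta>')"
      by (simp add: m0_def)
    ultimately show ?thesis using eqL by linarith
  qed
  have LipM: "AE \<omega> in M. \<forall>t. Lip (Y t \<omega>) \<and> Lip (Yrep t \<omega>)"
  proof -
    have "AE \<omega> in M. Lip (Y t \<omega>)" for t using AE_distrD[OF Ym[of t], of Lip, unfolded distY[of t], OF LipP] .
    moreover have "AE \<omega> in M. Lip (Yrep t \<omega>)" for t using AE_distrD[OF Rm[of t], of Lip, unfolded distR[of t], OF LipP] .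
    ultimately show ?thesis by (simp add: AE_all_countable)
  qed
  then obtain N where N: "{\<omega>\<in>space M. \<not> (\<forall>t. Lip (Y t \<omega>) \<and> Lip (Yrep t \<omega>))} \<subseteq> N" "N \<in> null_sets M"
    by (auto elim!: AE_E3)
  obtain R where R: "R > 0" "\<And>\<theta>. \<theta> \<in> \<Theta> \<Longrightarrow> norm \<theta> \<le> R"
    using compact_imp_bounded[OF A1] unfolding bounded_pos by blast
  define D where "D = - diag_part (exp_hessian (density \<mu> g) (loglik pdens) \<theta>p)"
  have qpos: "0 \<le> v \<bullet> (D *v v)" for v unfolding D_def by (rule diag_psd[OF A7(1)])
  obtain B0 where B0: "B0 > 0" "\<And>v w. \<bar>v \<bullet> (D *v v) - w \<bullet> (D *v w)\<bar> \<le> B0 * norm (v - w) * (norm v + norm w)"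
    using quad_lip by blast
  define B where "B = B0 * (4 * R)"
  have Bpos: "B > 0" using B0 R by (simp add: B_def)
  have qlip: "\<bar>(a - \<theta>) \<bullet> (D *v (a - \<theta>)) - (b - \<theta>) \<bullet> (D *v (b - \<theta>))\<bar> \<le> B * norm (a - b)"
    if "a \<in> \<Theta>" "b \<in> \<Theta>" "\<theta> \<in> \<Theta>" for a b \<theta>
  proof -
    have "norm (a - \<theta>) \<le> 2 * R" using R(2)[OF that(1)] R(2)[OF that(3)] norm_triangle_ineq4[of a \<theta>] by linarith
    moreover have "norm (b - \<theta>) \<le> 2 * R" using R(2)[OF that(2)] R(2)[OF that(3)] norm_triangle_ineq4[of b \<theta>] by linarith
    ultimately have "B0 * norm (a - b) * (norm (a - \<theta>) + norm (b - \<theta>)) \<le> B0 * norm (a - b) * (4 * R)"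
      using B0(1) by (intro mult_left_mono) auto
    then show ?thesis using B0(2)[of "a - \<theta>" "b - \<theta>"] by (simp add: B_def algebra_simps)
  qed
  define Xf where "Xf = (\<lambda>(b, t). if b then Y t else Yrep t)"
  have indXf: "indep_vars (\<lambda>_. \<mu>) Xf UNIV" using indep by (simp add: Xf_def)
  have distXf: "distr M \<mu> (Xf i) = P" for i by (cases i) (simp add: Xf_def distY distR)
  have wY: "(\<lambda>n. measure M {\<omega>\<in>space M. a \<le> \<bar>(\<Sum>t<n. loglik pdens \<theta> (Y t \<omega>)) / real n - L \<theta>\<bar>}) \<longlonglongrightarrow> 0"
    if "\<theta> \<in> \<Theta>" "0 < a" for \<theta> a
    using wlln[OF M indXf distXf, of "\<lambda>t. (True, t)" "\<lambda>y. loglik pdens \<theta> y" a] lm[OF that(1)] l2[OF that(1)] that(2)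
    by (simp add: Xf_def inj_def L_def)
  have wR: "(\<lambda>n. measure M {\<omega>\<in>space M. a \<le> \<bar>(\<Sum>t<n. loglik pdens \<theta> (Yrep t \<omega>)) / real n - L \<theta>\<bar>}) \<longlonglongrightarrow> 0"
    if "\<theta> \<in> \<Theta>" "0 < a" for \<theta> a
    using wlln[OF M indXf distXf, of "\<lambda>t. (False, t)" "\<lambda>y. loglik pdens \<theta> y" a] lm[OF that(1)] l2[OF that(1)] that(2)
    by (simp add: Xf_def inj_def L_def)
  have mkY: "measure M {\<omega>\<in>space M. K \<le> (\<Sum>t<n. c 0 (Y t \<omega>)) / real n} \<le> m0 / K" if "0 < K" "0 < n" for K n
    unfolding m0_def using c0pos by (intro markov_avg[OF M Ym distY c0m c0i _ that]) (auto simp: less_imp_le)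
  have mkR: "measure M {\<omega>\<in>space M. K \<le> (\<Sum>t<n. c 0 (Yrep t \<omega>)) / real n} \<le> m0 / K" if "0 < K" "0 < n" for K n
    unfolding m0_def using c0pos by (intro markov_avg[OF M Rm distR c0m c0i _ that]) (auto simp: less_imp_le)
  show ?thesis unfolding conv_in_prob_def
  proof (intro allI impI)
    fix \<epsilon> :: real assume \<epsilon>: "0 < \<epsilon>"
    obtain \<eta> where \<eta>: "\<eta> > 0" "\<And>\<theta>. \<theta> \<in> \<Theta> \<Longrightarrow> \<epsilon> \<le> dist \<theta> \<theta>p \<Longrightarrow> L \<theta> \<le> L \<theta>p - \<eta>"
      using A6(2) \<epsilon> unfolding L_def P_def by blast
    define \<epsilon>' where "\<epsilon>' = \<eta> / (2 * B)"
    have \<epsilon>': "0 < \<epsilon>'" "B * \<epsilon>' = \<eta> / 2" using \<eta> Bpos by (auto simp: \<epsilon>'_def)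
    obtain \<eta>' where \<eta>': "\<eta>' > 0" "\<And>\<theta>. \<theta> \<in> \<Theta> \<Longrightarrow> \<epsilon>' \<le> dist \<theta> \<theta>p \<Longrightarrow> L \<theta> \<le> L \<theta>p - \<eta>'"
      using A6(2) \<epsilon>'(1) unfolding L_def P_def by blast
    define s where "s = min (\<eta> / 8) (\<eta>' / 4)"
    have s: "0 < s" "s \<le> \<eta> / 8" "s \<le> \<eta>' / 4" using \<eta> \<eta>' by (auto simp: s_def)
    show "(\<lambda>n. measure M {\<omega> \<in> space M. \<epsilon> < dist (\<theta>til n \<omega>) \<theta>p}) \<longlonglongrightarrow> 0"
    proof (rule tendstoI)
      fix e :: real assume e: "0 < e"
      define Kc where "Kc = 4 * (m0 + 1) / e"
      have Kc: "0 < Kc" "m0 / Kc < e / 4" using e m0 by (auto simp: Kc_def field_simps)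
      define \<delta>' where "\<delta>' = s / (2 * (Kc + m0 + 1))"
      have \<delta>': "0 < \<delta>'" "(Kc + m0) * \<delta>' \<le> s / 2" using s Kc m0 by (auto simp: \<delta>'_def field_simps)
      define a where "a = s / 2"
      have a: "0 < a" using s by (simp add: a_def)
      obtain F where F: "F \<subseteq> \<Theta>" "finite F" "\<Theta> \<subseteq> (\<Union>\<phi>\<in>F. ball \<phi> \<delta>')"
        using compactE_image[OF A1, of \<Theta> "\<lambda>\<phi>. ball \<phi> \<delta>'"] \<delta>'(1) by force
      define EY where "EY n \<phi> = {\<omega>\<in>space M. a \<le> \<bar>(\<Sum>t<n. loglik pdens \<phi> (Y t \<omega>)) / real n - L \<phi>\<bar>}" for n \<phi>
      define ER where "ER n \<phi> = {\<omega>\<in>space M. a \<le> \<bar>(\<Sum>t<n. loglik pdens \<phi> (Yrep t \<omega>)) / real n - L \<phi>\<bar>}" for n \<phi>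
      define CY where "CY n = {\<omega>\<in>space M. Kc \<le> (\<Sum>t<n. c 0 (Y t \<omega>)) / real n}" for n
      define CR where "CR n = {\<omega>\<in>space M. Kc \<le> (\<Sum>t<n. c 0 (Yrep t \<omega>)) / real n}" for n
      define Bad where "Bad n = {\<omega>\<in>space M. \<epsilon> < dist (\<theta>til n \<omega>) \<theta>p}" for n
      note c0m[measurable]
      have EYs: "EY n \<phi> \<in> sets M" "ER n \<phi> \<in> sets M" if "\<phi> \<in> \<Theta>" for n \<phi>
      proof -
        note lm[OF that, measurable]
        show "EY n \<phi> \<in> sets M" unfolding EY_def by measurable
        show "ER n \<phi> \<in> sets M" unfolding ER_def by measurable
      qed
      have CYs: "CY n \<in> sets M" "CR n \<in> sets M" for n
      proof -
        show "CY n \<in> sets M" unfolding CY_def by measurable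
        show "CR n \<in> sets M" unfolding CR_def by measurable
      qed
      have Bads: "Bad n \<in> sets M" for n
      proof -
        note til_meas[rule_format, of n, measurable]
        show ?thesis unfolding Bad_def by measurable
      qed
      have unif: "\<forall>\<theta>\<in>\<Theta>. \<bar>(\<Sum>t<n. loglik pdens \<theta> (X t \<omega>)) / real n - L \<theta>\<bar> < s"
        if n: "0 < n" and lp: "\<forall>t. Lip (X t \<omega>)" and sp: "\<forall>t. X t \<omega> \<in> space \<mu>"
          and fa: "\<forall>\<phi>\<in>F. \<bar>(\<Sum>t<n. loglik pdens \<phi> (X t \<omega>)) / real n - L \<phi>\<bar> < a"
          and cb: "(\<Sum>t<n. c 0 (X t \<omega>)) / real n < Kc"
        for X :: "nat \<Rightarrow> 'w \<Rightarrow> 'a" and \<omega> n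
      proof
        fix \<theta> assume th: "\<theta> \<in> \<Theta>"
        obtain \<phi> where \<phi>: "\<phi> \<in> F" "\<theta> \<in> ball \<phi> \<delta>'" using F(3) th by blast
        have phT: "\<phi> \<in> \<Theta>" using F(1) \<phi>(1) by blast
        define C where "C = (\<Sum>t<n. c 0 (X t \<omega>)) / real n"
        have C0: "0 \<le> C" using sp c0pos unfolding C_def
          by (intro divide_nonneg_nonneg sum_nonneg) (auto simp: less_imp_le)
        have nrm: "norm (\<theta> - \<phi>) < \<delta>'" using \<phi>(2) by (simp add: dist_norm norm_minus_commute)
        have diffA: "\<bar>(\<Sum>t<n. loglik pdens \<theta> (X t \<omega>)) / real n - (\<Sum>t<n. loglik pdens \<phi> (X t \<omega>)) / real n\<bar> \<le> C * norm (\<theta> - \<phi>)"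
        proof -
          have "\<bar>(\<Sum>t<n. loglik pdens \<theta> (X t \<omega>)) - (\<Sum>t<n. loglik pdens \<phi> (X t \<omega>))\<bar>
                = \<bar>\<Sum>t<n. loglik pdens \<theta> (X t \<omega>) - loglik pdens \<phi> (X t \<omega>)\<bar>" by (simp add: sum_subtractf)
          also have "\<dots> \<le> (\<Sum>t<n. \<bar>loglik pdens \<theta> (X t \<omega>) - loglik pdens \<phi> (X t \<omega>)\<bar>)" by (rule sum_abs)
          also have "\<dots> \<le> (\<Sum>t<n. c 0 (X t \<omega>) * norm (\<theta> - \<phi>))"
            using lp th phT by (intro sum_mono) (simp add: Lip_def)
          also have "\<dots> = (\<Sum>t<n. c 0 (X t \<omega>)) * norm (\<theta> - \<phi>)" by (simp add: sum_distrib_right)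
          finally have 1: "\<bar>(\<Sum>t<n. loglik pdens \<theta> (X t \<omega>)) - (\<Sum>t<n. loglik pdens \<phi> (X t \<omega>))\<bar>
              \<le> (\<Sum>t<n. c 0 (X t \<omega>)) * norm (\<theta> - \<phi>)" .
          have 2: "\<bar>x / real n - y / real n\<bar> = \<bar>x - y\<bar> / real n" for x y
            using n by (simp add: diff_divide_distrib[symmetric] abs_divide)
          show ?thesis unfolding 2 C_def using divide_right_mono[OF 1, of "real n"] by simp
        qed
        have diffL: "\<bar>L \<theta> - L \<phi>\<bar> \<le> m0 * norm (\<theta> - \<phi>)" by (rule Llip[OF th phT])
        have mm: "(C + m0) * norm (\<theta> - \<phi>) \<le> (Kc + m0) * \<delta>'"
          using C0 m0 nrm cb unfolding C_def[symmetric] by (intro mult_mono) auto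
        have fphi: "\<bar>(\<Sum>t<n. loglik pdens \<phi> (X t \<omega>)) / real n - L \<phi>\<bar> < a" using fa \<phi>(1) by blast
        have "\<bar>(\<Sum>t<n. loglik pdens \<theta> (X t \<omega>)) / real n - L \<theta>\<bar>
              \<le> \<bar>(\<Sum>t<n. loglik pdens \<phi> (X t \<omega>)) / real n - L \<phi>\<bar> + C * norm (\<theta> - \<phi>) + m0 * norm (\<theta> - \<phi>)"
          using diffA diffL by arith
        also have "\<dots> < a + (Kc + m0) * \<delta>'" using fphi mm by (simp add: algebra_simps)
        also have "\<dots> \<le> s" using \<delta>'(2) by (simp add: a_def)
        finally show "\<bar>(\<Sum>t<n. loglik pdens \<theta> (X t \<omega>)) / real n - L \<theta>\<bar> < s" .
      qed
      have det: "\<not> \<epsilon> < dist (\<theta>til n \<omega>) \<theta>p"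
        if n: "0 < n" and \<omega>: "\<omega> \<in> space M"
          and sY: "\<forall>\<theta>\<in>\<Theta>. \<bar>(\<Sum>t<n. loglik pdens \<theta> (Y t \<omega>)) / real n - L \<theta>\<bar> < s"
          and sR: "\<forall>\<theta>\<in>\<Theta>. \<bar>(\<Sum>t<n. loglik pdens \<theta> (Yrep t \<omega>)) / real n - L \<theta>\<bar> < s"
        for n \<omega>
      proof
        assume far: "\<epsilon> < dist (\<theta>til n \<omega>) \<theta>p"
        define h where "h = \<theta>hat n \<omega>"
        define ti where "ti = \<theta>til n \<omega>"
        have hT: "h \<in> \<Theta>" and QMLw: "\<forall>\<theta>\<in>\<Theta>. (\<Sum>t<n. loglik pdens \<theta> (Y t \<omega>)) \<le> (\<Sum>t<n. loglik pdens h (Y t \<omega>))"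
          using QML \<omega> unfolding h_def by blast+
        have tT: "ti \<in> \<Theta>" and TMw: "\<forall>\<theta>\<in>\<Theta>. (\<Sum>t<n. loglik pdens \<theta> (Yrep t \<omega>)) - real n / 2 * ((h - \<theta>) \<bullet> (D *v (h - \<theta>)))
                 \<le> (\<Sum>t<n. loglik pdens ti (Yrep t \<omega>)) - real n / 2 * ((h - ti) \<bullet> (D *v (h - ti)))"
          using til_max[unfolded D_def[symmetric]] \<omega> unfolding h_def ti_def by blast+
        have pT: "\<theta>p \<in> \<Theta>" by (rule pseudo_true(1))
        have "(\<Sum>t<n. loglik pdens \<theta>p (Y t \<omega>)) / real n \<le> (\<Sum>t<n. loglik pdens h (Y t \<omega>)) / real n"
          using QMLw pT by (intro divide_right_mono) auto
        moreover have "\<bar>(\<Sum>t<n. loglik pdens \<theta>p (Y t \<omega>)) / real n - L \<theta>p\<bar> < s" using sY pT by blast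
        moreover have "\<bar>(\<Sum>t<n. loglik pdens h (Y t \<omega>)) / real n - L h\<bar> < s" using sY hT by blast
        ultimately have Lh: "L h > L \<theta>p - 2 * s" by arith
        have hclose: "dist h \<theta>p < \<epsilon>'"
        proof (rule ccontr)
          assume "\<not> dist h \<theta>p < \<epsilon>'"
          then have "L h \<le> L \<theta>p - \<eta>'" using \<eta>'(2)[OF hT] by simp
          then show False using Lh s by linarith
        qed
        have hq: "\<bar>(h - \<theta>) \<bullet> (D *v (h - \<theta>)) - (\<theta>p - \<theta>) \<bullet> (D *v (\<theta>p - \<theta>))\<bar> \<le> \<eta> / 2" if "\<theta> \<in> \<Theta>" for \<theta>
        proof -
          have "B * norm (h - \<theta>p) \<le> B * \<epsilon>'" using hclose Bpos by (simp add: dist_norm)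
          then show ?thesis using qlip[OF hT pT that] \<epsilon>'(2) by linarith
        qed
        have q1: "(h - \<theta>p) \<bullet> (D *v (h - \<theta>p)) \<le> \<eta> / 2" using hq[OF pT] by simp
        have q2: "(h - ti) \<bullet> (D *v (h - ti)) \<ge> - \<eta> / 2" using hq[OF tT] qpos[of "\<theta>p - ti"] by linarith
        have "(\<Sum>t<n. loglik pdens \<theta>p (Yrep t \<omega>)) - real n / 2 * ((h - \<theta>p) \<bullet> (D *v (h - \<theta>p)))
                 \<le> (\<Sum>t<n. loglik pdens ti (Yrep t \<omega>)) - real n / 2 * ((h - ti) \<bullet> (D *v (h - ti)))"
          using TMw pT by blast
        then have "((\<Sum>t<n. loglik pdens \<theta>p (Yrep t \<omega>)) - real n / 2 * ((h - \<theta>p) \<bullet> (D *v (h - \<theta>p)))) / real n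
                 \<le> ((\<Sum>t<n. loglik pdens ti (Yrep t \<omega>)) - real n / 2 * ((h - ti) \<bullet> (D *v (h - ti)))) / real n"
          by (rule divide_right_mono) simp
        moreover have "(x - real n / 2 * y) / real n = x / real n - y / 2" for x y
          using n by (simp add: field_simps)
        ultimately have ineq: "(\<Sum>t<n. loglik pdens \<theta>p (Yrep t \<omega>)) / real n - ((h - \<theta>p) \<bullet> (D *v (h - \<theta>p))) / 2
                 \<le> (\<Sum>t<n. loglik pdens ti (Yrep t \<omega>)) / real n - ((h - ti) \<bullet> (D *v (h - ti))) / 2" by simp
        have r1: "\<bar>(\<Sum>t<n. loglik pdens \<theta>p (Yrep t \<omega>)) / real n - L \<theta>p\<bar> < s" using sR pT by blast
        have r2: "\<bar>(\<Sum>t<n. loglik pdens ti (Yrep t \<omega>)) / real n - L ti\<bar> < s" using sR tT by blast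
        have Lt: "L ti \<le> L \<theta>p - \<eta>" using \<eta>(2)[OF tT] far by (simp add: ti_def)
        show False using ineq r1 r2 Lt q1 q2 s \<eta>(1) by arith
      qed
      have incl: "Bad n \<subseteq> ((\<Union>\<phi>\<in>F. EY n \<phi>) \<union> (\<Union>\<phi>\<in>F. ER n \<phi>) \<union> CY n \<union> CR n) \<union> N" if n: "0 < n" for n
      proof
        fix \<omega> assume b: "\<omega> \<in> Bad n"
        then have \<omega>: "\<omega> \<in> space M" by (simp add: Bad_def)
        show "\<omega> \<in> ((\<Union>\<phi>\<in>F. EY n \<phi>) \<union> (\<Union>\<phi>\<in>F. ER n \<phi>) \<union> CY n \<union> CR n) \<union> N"
        proof (rule ccontr)
          assume nin: "\<omega> \<notin> ((\<Union>\<phi>\<in>F. EY n \<phi>) \<union> (\<Union>\<phi>\<in>F. ER n \<phi>) \<union> CY n \<union> CR n) \<union> N"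
          then have lps: "\<forall>t. Lip (Y t \<omega>) \<and> Lip (Yrep t \<omega>)" using N(1) \<omega> by blast
          have spY: "\<forall>t. Y t \<omega> \<in> space \<mu>" "\<forall>t. Yrep t \<omega> \<in> space \<mu>"
            using \<omega> measurable_space[OF Ym] measurable_space[OF Rm] by blast+
          have fY: "\<forall>\<phi>\<in>F. \<bar>(\<Sum>t<n. loglik pdens \<phi> (Y t \<omega>)) / real n - L \<phi>\<bar> < a"
            using nin \<omega> by (auto simp: EY_def not_le)
          have fR: "\<forall>\<phi>\<in>F. \<bar>(\<Sum>t<n. loglik pdens \<phi> (Yrep t \<omega>)) / real n - L \<phi>\<bar> < a"
            using nin \<omega> by (auto simp: ER_def not_le)
          have cY: "(\<Sum>t<n. c 0 (Y t \<omega>)) / real n < Kc" using nin \<omega> by (auto simp: CY_def not_le)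
          have cR: "(\<Sum>t<n. c 0 (Yrep t \<omega>)) / real n < Kc" using nin \<omega> by (auto simp: CR_def not_le)
          have sY: "\<forall>\<theta>\<in>\<Theta>. \<bar>(\<Sum>t<n. loglik pdens \<theta> (Y t \<omega>)) / real n - L \<theta>\<bar> < s"
            using unif[of n Y \<omega>] n lps spY(1) fY cY by blast
          have sR: "\<forall>\<theta>\<in>\<Theta>. \<bar>(\<Sum>t<n. loglik pdens \<theta> (Yrep t \<omega>)) / real n - L \<theta>\<bar> < s"
            using unif[of n Yrep \<omega>] n lps spY(2) fR cR by blast
          show False using det[OF n \<omega> sY sR] b by (simp add: Bad_def)
        qed
      qed
      have mb: "measure M (Bad n) \<le> (\<Sum>\<phi>\<in>F. measure M (EY n \<phi>)) + (\<Sum>\<phi>\<in>F. measure M (ER n \<phi>)) + m0 / Kc + m0 / Kc"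
        if n: "0 < n" for n
      proof -
        have s1: "(\<Union>\<phi>\<in>F. EY n \<phi>) \<in> sets M" "(\<Union>\<phi>\<in>F. ER n \<phi>) \<in> sets M"
          using EYs F(1,2) by (auto intro!: sets.finite_UN)
        have U: "(\<Union>\<phi>\<in>F. EY n \<phi>) \<union> (\<Union>\<phi>\<in>F. ER n \<phi>) \<union> CY n \<union> CR n \<in> sets M"
          using s1 CYs by auto
        have "measure M (Bad n) \<le> measure M (((\<Union>\<phi>\<in>F. EY n \<phi>) \<union> (\<Union>\<phi>\<in>F. ER n \<phi>) \<union> CY n \<union> CR n) \<union> N)"
          using incl[OF n] U N(2) by (intro finite_measure_mono) auto
        also have "\<dots> = measure M ((\<Union>\<phi>\<in>F. EY n \<phi>) \<union> (\<Union>\<phi>\<in>F. ER n \<phi>) \<union> CY n \<union> CR n)"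
          using U N(2) by (rule measure_Un_null_set)
        also have "\<dots> \<le> measure M (\<Union>\<phi>\<in>F. EY n \<phi>) + measure M (\<Union>\<phi>\<in>F. ER n \<phi>) + measure M (CY n) + measure M (CR n)"
        proof -
          let ?A = "\<Union>\<phi>\<in>F. EY n \<phi>" and ?B = "\<Union>\<phi>\<in>F. ER n \<phi>"
          have 1: "measure M (?A \<union> ?B \<union> CY n \<union> CR n) \<le> measure M (?A \<union> ?B \<union> CY n) + measure M (CR n)"
            using s1 CYs by (intro measure_Un_le) auto
          have 2: "measure M (?A \<union> ?B \<union> CY n) \<le> measure M (?A \<union> ?B) + measure M (CY n)"
            using s1 CYs by (intro measure_Un_le) auto
          have 3: "measure M (?A \<union> ?B) \<le> measure M ?A + measure M ?B"
            using s1 by (intro measure_Un_le) auto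
          show ?thesis using 1 2 3 by linarith
        qed
        also have "\<dots> \<le> (\<Sum>\<phi>\<in>F. measure M (EY n \<phi>)) + (\<Sum>\<phi>\<in>F. measure M (ER n \<phi>)) + m0 / Kc + m0 / Kc"
        proof -
          have "measure M (\<Union>\<phi>\<in>F. EY n \<phi>) \<le> (\<Sum>\<phi>\<in>F. measure M (EY n \<phi>))"
            using F EYs by (intro measure_UNION_le) auto
          moreover have "measure M (\<Union>\<phi>\<in>F. ER n \<phi>) \<le> (\<Sum>\<phi>\<in>F. measure M (ER n \<phi>))"
            using F EYs by (intro measure_UNION_le) auto
          moreover have "measure M (CY n) \<le> m0 / Kc" unfolding CY_def by (rule mkY[OF Kc(1) n])
          moreover have "measure M (CR n) \<le> m0 / Kc" unfolding CR_def by (rule mkR[OF Kc(1) n])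
          ultimately show ?thesis by linarith
        qed
        finally show ?thesis .
      qed
      have tY: "(\<lambda>n. \<Sum>\<phi>\<in>F. measure M (EY n \<phi>)) \<longlonglongrightarrow> 0"
        by (rule tendsto_null_sum) (use wY F(1) a in \<open>auto simp: EY_def\<close>)
      have tR: "(\<lambda>n. \<Sum>\<phi>\<in>F. measure M (ER n \<phi>)) \<longlonglongrightarrow> 0"
        by (rule tendsto_null_sum) (use wR F(1) a in \<open>auto simp: ER_def\<close>)
      have evY: "eventually (\<lambda>n. (\<Sum>\<phi>\<in>F. measure M (EY n \<phi>)) < e / 4) sequentially"
        using e by (intro order_tendstoD(2)[OF tY]) simp
      have evR: "eventually (\<lambda>n. (\<Sum>\<phi>\<in>F. measure M (ER n \<phi>)) < e / 4) sequentially"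
        using e by (intro order_tendstoD(2)[OF tR]) simp
      have "eventually (\<lambda>n. dist (measure M (Bad n)) 0 < e) sequentially"
        using evY evR eventually_gt_at_top[of "0::nat"]
      proof eventually_elim
        case (elim n)
        then show ?case using mb[of n] Kc(2) by simp
      qed
      then show "\<forall>\<^sub>F n in sequentially. dist (measure M {\<omega> \<in> space M. \<epsilon> < dist (\<theta>til n \<omega>) \<theta>p}) 0 < e"
        by (simp add: Bad_def)
    qed
  qed
qed

end
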